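(* Let $0<\delta<\frac12$, and let $T_0$ be an $N_0$-vertex tournament which is $\delta^2$-close to transitive. Then there exist an integer $N\geq(1-\delta)N_0$, an $N$-vertex subtournament $T$ of $T_0$, and an ordered graph $G$ on the vertex set of $T$ such that $G$ is consistent with $T$ and every vertex of $G$ has at most $4\delta N$ non-neighbors in $G$.
   Context: A tournament is an orientation of a complete graph; a subtournament is the tournament induced on a subset of vertices. An $N$-vertex tournament is $\delta$-close to transitive if it can be made transitive by reversing the orientation of at most $\delta N^2$ edges. An ordered graph is a graph with a linear order $\prec$ on its vertex set. An ordered graph $G$ is consistent with a tournament $T$ on the same vertex set if for all vertices $v\prec w$, $vw\in E(G)$ if and only if $v\to w$ in $T$. *)

theory Defs
  imports Complex_Main
begin

text \<open>A tournament on a finite vertex set V, with arc relation A (A v w means v \<rightarrow> w).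
  Only the values of A on V matter.\<close>
definition tournament :: "'a set \<Rightarrow> ('a \<Rightarrow> 'a \<Rightarrow> bool) \<Rightarrow> bool" where
  "tournament V A \<longleftrightarrow> finite V \<and> (\<forall>v\<in>V. \<not> A v v) \<and>
     (\<forall>v\<in>V. \<forall>w\<in>V. v \<noteq> w \<longrightarrow> (A v w \<longleftrightarrow> \<not> A w v))"

definition transitive_tournament :: "'a set \<Rightarrow> ('a \<Rightarrow> 'a \<Rightarrow> bool) \<Rightarrow> bool" where
  "transitive_tournament V A \<longleftrightarrow> tournament V A \<and>
     (\<forall>u\<in>V. \<forall>v\<in>V. \<forall>w\<in>V. A u v \<and> A v w \<longrightarrow> A u w)"

definition reversed_edges :: "'a set \<Rightarrow> ('a \<Rightarrow> 'a \<Rightarrow> bool) \<Rightarrow> ('a \<Rightarrow> 'a \<Rightarrow> bool) \<Rightarrow> 'a set set" where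
  "reversed_edges V A B = {{v, w} | v w. v \<in> V \<and> w \<in> V \<and> v \<noteq> w \<and> A v w \<and> \<not> B v w}"

definition close_to_transitive :: "'a set \<Rightarrow> ('a \<Rightarrow> 'a \<Rightarrow> bool) \<Rightarrow> real \<Rightarrow> bool" where
  "close_to_transitive V A \<delta> \<longleftrightarrow>
     (\<exists>B. transitive_tournament V B \<and>
          real (card (reversed_edges V A B)) \<le> \<delta> * (real (card V))\<^sup>2)"

definition strict_lin_order_on :: "'a set \<Rightarrow> ('a \<Rightarrow> 'a \<Rightarrow> bool) \<Rightarrow> bool" where
  "strict_lin_order_on S lt \<longleftrightarrow> (\<forall>v\<in>S. \<not> lt v v) \<and>
     (\<forall>u\<in>S. \<forall>v\<in>S. \<forall>w\<in>S. lt u v \<and> lt v w \<longrightarrow> lt u w) \<and>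
     (\<forall>v\<in>S. \<forall>w\<in>S. v \<noteq> w \<longrightarrow> lt v w \<or> lt w v)"

definition simple_graph_on :: "'a set \<Rightarrow> ('a \<Rightarrow> 'a \<Rightarrow> bool) \<Rightarrow> bool" where
  "simple_graph_on S E \<longleftrightarrow> (\<forall>v\<in>S. \<not> E v v) \<and> (\<forall>v\<in>S. \<forall>w\<in>S. E v w \<longleftrightarrow> E w v)"

definition consistent :: "'a set \<Rightarrow> ('a \<Rightarrow> 'a \<Rightarrow> bool) \<Rightarrow> ('a \<Rightarrow> 'a \<Rightarrow> bool) \<Rightarrow> ('a \<Rightarrow> 'a \<Rightarrow> bool) \<Rightarrow> bool" where
  "consistent S lt E A \<longleftrightarrow> (\<forall>v\<in>S. \<forall>w\<in>S. lt v w \<longrightarrow> (E v w \<longleftrightarrow> A v w))"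

definition non_neighbours :: "'a set \<Rightarrow> ('a \<Rightarrow> 'a \<Rightarrow> bool) \<Rightarrow> 'a \<Rightarrow> 'a set" where
  "non_neighbours S E v = {u \<in> S. u \<noteq> v \<and> \<not> E v u}"

end

theory Submission
  imports Defs
begin

lemma double_count:
  assumes tA: "tournament V A" and tB: "tournament V B"
  shows "card (Sigma V (\<lambda>v. {u\<in>V. u \<noteq> v \<and> A v u \<noteq> B v u})) \<le> 2 * card (reversed_edges V A B)"
proof -
  have fin: "finite V" using tA unfolding tournament_def by auto
  define P1 where "P1 = {(v,u). v \<in> V \<and> u \<in> V \<and> v \<noteq> u \<and> A v u \<and> \<not> B v u}"
  define P2 where "P2 = (\<lambda>(v,u). (u,v)) ` P1"
  have sub: "Sigma V (\<lambda>v. {u\<in>V. u \<noteq> v \<and> A v u \<noteq> B v u}) \<subseteq> P1 \<union> P2"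
  proof
    fix x assume "x \<in> Sigma V (\<lambda>v. {u\<in>V. u \<noteq> v \<and> A v u \<noteq> B v u})"
    then obtain v u where x: "x = (v,u)" "v \<in> V" "u \<in> V" "u \<noteq> v" "A v u \<noteq> B v u" by auto
    show "x \<in> P1 \<union> P2"
    proof (cases "A v u")
      case True then show ?thesis using x unfolding P1_def by auto
    next
      case False
      then have "A u v" "\<not> B u v" using x tA tB unfolding tournament_def by metis+
      then have "(u,v) \<in> P1" using x unfolding P1_def by auto
      then show ?thesis unfolding P2_def x by force
    qed
  qed
  have finP1: "finite P1"
    by (rule finite_subset[of _ "V \<times> V"]) (auto simp: P1_def fin)
  have inj: "inj_on (\<lambda>(v,u). {v,u}) P1"
  proof (rule inj_onI)
    fix x y assume "x \<in> P1" "y \<in> P1" "(\<lambda>(v,u). {v,u}) x = (\<lambda>(v,u). {v,u}) y"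
    then obtain a b c d where xy: "x = (a,b)" "y = (c,d)" "{a,b} = {c,d}"
      "a \<in> V" "b \<in> V" "a \<noteq> b" "A a b" "\<not> B a b"
      "c \<in> V" "d \<in> V" "c \<noteq> d" "A c d" "\<not> B c d"
      unfolding P1_def by auto
    then have "(a = c \<and> b = d) \<or> (a = d \<and> b = c)" by (metis doubleton_eq_iff)
    moreover have "\<not> (a = d \<and> b = c)"
      using xy tA unfolding tournament_def by metis
    ultimately show "x = y" using xy by auto
  qed
  have img: "(\<lambda>(v,u). {v,u}) ` P1 = reversed_edges V A B"
    unfolding P1_def reversed_edges_def by auto
  have c1: "card P1 = card (reversed_edges V A B)"
    using card_image[OF inj] img by simp
  have c2: "card P2 \<le> card P1" unfolding P2_def by (rule card_image_le[OF finP1])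
  have "card (Sigma V (\<lambda>v. {u\<in>V. u \<noteq> v \<and> A v u \<noteq> B v u})) \<le> card (P1 \<union> P2)"
    by (rule card_mono[OF _ sub]) (auto simp: finP1 P2_def)
  also have "\<dots> \<le> card P1 + card P2" by (rule card_Un_le)
  finally show ?thesis using c1 c2 by simp
qed

theorem lemma4p2:
  fixes V0 :: "'a set" and A :: "'a \<Rightarrow> 'a \<Rightarrow> bool" and \<delta> :: real
  assumes "0 < \<delta>" and "\<delta> < 1/2"
    and "tournament V0 A"
    and "close_to_transitive V0 A (\<delta>\<^sup>2)"
  shows "\<exists>N::nat. real N \<ge> (1 - \<delta>) * real (card V0) \<and>
           (\<exists>S. S \<subseteq> V0 \<and> card S = N \<and>
              (\<exists>lt E. strict_lin_order_on S lt \<and> simple_graph_on S E \<and>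
                 consistent S lt E A \<and>
                 (\<forall>v\<in>S. real (card (non_neighbours S E v)) \<le> 4 * \<delta> * real N)))"
proof -
  obtain B where tB: "transitive_tournament V0 B"
    and R: "real (card (reversed_edges V0 A B)) \<le> \<delta>\<^sup>2 * (real (card V0))\<^sup>2"
    using assms(4) unfolding close_to_transitive_def by auto
  have tB': "tournament V0 B" using tB unfolding transitive_tournament_def by auto
  have tA: "tournament V0 A" by fact
  have fin: "finite V0" using tA unfolding tournament_def by auto
  define n where "n = card V0"
  define D where "D = (\<lambda>v. {u\<in>V0. u \<noteq> v \<and> A v u \<noteq> B v u})"
  define d where "d = (\<lambda>v. card (D v))"
  have sumd: "(\<Sum>v\<in>V0. real (d v)) \<le> 2 * \<delta>\<^sup>2 * (real n)\<^sup>2"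
  proof -
    have "(\<Sum>v\<in>V0. d v) = card (Sigma V0 D)"
      using card_SigmaI[OF fin, of D] fin unfolding d_def D_def by auto
    also have "\<dots> \<le> 2 * card (reversed_edges V0 A B)"
      unfolding D_def by (rule double_count[OF tA tB'])
    finally have "real (\<Sum>v\<in>V0. d v) \<le> 2 * real (card (reversed_edges V0 A B))"
      by linarith
    then show ?thesis using R unfolding n_def by (simp add: of_nat_sum)
  qed
  define Bad where "Bad = {v\<in>V0. real (d v) > 2 * \<delta> * real n}"
  define S where "S = V0 - Bad"
  have finBad: "finite Bad" using fin unfolding Bad_def by auto
  have BadV: "Bad \<subseteq> V0" unfolding Bad_def by auto
  have cBad: "real (card Bad) \<le> \<delta> * real n"
  proof (cases "n = 0")
    case True
    then have "V0 = {}" using fin unfolding n_def by auto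
    then show ?thesis unfolding Bad_def using True by simp
  next
    case False
    have "real (card Bad) * (2 * \<delta> * real n) = (\<Sum>v\<in>Bad. 2 * \<delta> * real n)" by simp
    also have "\<dots> \<le> (\<Sum>v\<in>Bad. real (d v))"
      by (rule sum_mono) (auto simp: Bad_def)
    also have "\<dots> \<le> (\<Sum>v\<in>V0. real (d v))"
      by (rule sum_mono2[OF fin BadV]) auto
    also have "\<dots> \<le> 2 * \<delta>\<^sup>2 * (real n)\<^sup>2" by fact
    also have "\<dots> = (\<delta> * real n) * (2 * \<delta> * real n)" by (simp add: power2_eq_square)
    finally have "real (card Bad) * (2 * \<delta> * real n) \<le> (\<delta> * real n) * (2 * \<delta> * real n)" .
    moreover have "2 * \<delta> * real n > 0" using False assms(1) by simp
    ultimately show ?thesis by (meson mult_le_cancel_right_pos)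
  qed
  have cS: "card S = n - card Bad" unfolding S_def n_def using card_Diff_subset[OF finBad BadV] by simp
  have cS': "real (card S) = real n - real (card Bad)"
    using cS card_mono[OF fin BadV] unfolding n_def by simp
  have Nbig: "real (card S) \<ge> (1 - \<delta>) * real n" using cS' cBad by (simp add: algebra_simps)
  define E where "E = (\<lambda>v w. v \<noteq> w \<and> (A v w = B v w))"
  have SV: "S \<subseteq> V0" unfolding S_def by auto
  have lin: "strict_lin_order_on S B"
    using tB SV unfolding transitive_tournament_def tournament_def strict_lin_order_on_def
    by (meson subsetD)
  have sg: "simple_graph_on S E"
    unfolding simple_graph_on_def E_def
  proof (intro conjI ballI)
    fix v w assume "v \<in> S" "w \<in> S"
    then have "v \<in> V0" "w \<in> V0" using SV by auto
    then show "(v \<noteq> w \<and> A v w = B v w) = (w \<noteq> v \<and> A w v = B w v)"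
      using tA tB' unfolding tournament_def by metis
  qed auto
  have cons: "consistent S B E A"
    unfolding consistent_def E_def
  proof (intro ballI impI)
    fix v w assume "v \<in> S" "w \<in> S" "B v w"
    then have "v \<noteq> w" using tB' SV unfolding tournament_def by auto
    then show "(v \<noteq> w \<and> A v w = B v w) = A v w" using \<open>B v w\<close> by simp
  qed
  have nn: "real (card (non_neighbours S E v)) \<le> 4 * \<delta> * real (card S)" if v: "v \<in> S" for v
  proof -
    have "non_neighbours S E v \<subseteq> D v"
      unfolding non_neighbours_def D_def E_def using SV by auto
    then have "card (non_neighbours S E v) \<le> d v"
      unfolding d_def by (rule card_mono[rotated]) (auto simp: D_def fin)
    moreover have "real (d v) \<le> 2 * \<delta> * real n" using v unfolding S_def Bad_def by auto
    moreover have "2 * \<delta> * real n \<le> 4 * \<delta> * real (card S)"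
    proof -
      have "\<delta> * real n \<le> 1/2 * real n" using assms(2) by (intro mult_right_mono) auto
      then have "real n \<le> 2 * real (card S)" using Nbig by (simp add: algebra_simps)
      then have "(2 * \<delta>) * real n \<le> (2 * \<delta>) * (2 * real (card S))" using assms(1) by (intro mult_left_mono) auto
      then show ?thesis by (simp add: algebra_simps)
    qed
    ultimately show ?thesis by linarith
  qed
  show ?thesis
    apply (rule exI[of _ "card S"])
    using Nbig SV lin sg cons nn unfolding n_def by blast
qed

end
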